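(* Let $r_1,\dots,r_n\in\mathbb R$ and $r=\mathrm{diag}(r_1,\dots,r_n)$. For each $1\le i,k\le n$, the polynomials $\sigma_k(r+tI)$ (of degree $k$) and $q_{i,k}(t)$ (of degree $k-1$) have only real roots.
   Context: $\sigma_k(r+tI)=\sum_{i_1<\cdots<i_k}(t+r_{i_1})\cdots(t+r_{i_k})$, and $q_{i,k}(t)=\sum_{j=0}^{k-1}(-1)^j\sigma_{k-1-j}(r+tI)(t+r_i)^j$ with $\sigma_0=1$. *)

theory Defs
  imports Complex_Main "HOL-Computational_Algebra.Polynomial"
begin

text \<open>The polynomial in t given by sigma_k(r + tI) for r = diag(r_1,...,r_n):
  sum over k-element subsets S of {1..n} of the product of (t + r_i), i in S.\<close>
definition sigma_poly :: "(nat \<Rightarrow> real) \<Rightarrow> nat \<Rightarrow> nat \<Rightarrow> real poly" where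
  "sigma_poly r n k = (\<Sum>S\<in>{S. S \<subseteq> {1..n} \<and> card S = k}. \<Prod>i\<in>S. [:r i, 1:])"

definition q_poly :: "(nat \<Rightarrow> real) \<Rightarrow> nat \<Rightarrow> nat \<Rightarrow> nat \<Rightarrow> real poly" where
  "q_poly r n i k = (\<Sum>j<k. smult ((-1) ^ j) (sigma_poly r n (k - 1 - j) * [:r i, 1:] ^ j))"

definition only_real_roots :: "real poly \<Rightarrow> bool" where
  "only_real_roots p \<longleftrightarrow> (\<forall>z::complex. poly (map_poly complex_of_real p) z = 0 \<longrightarrow> z \<in> \<real>)"

end

theory Submission imports Defs "HOL-Computational_Algebra.Fundamental_Theorem_Algebra" begin

lemma map_poly_of_real_mult:
  "map_poly (of_real :: real \<Rightarrow> complex) (p * q) = map_poly of_real p * map_poly of_real q"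
  by (rule poly_eqI) (simp add: coeff_map_poly coeff_mult of_real_sum)

lemma map_poly_of_real_pderiv:
  "map_poly (of_real :: real \<Rightarrow> complex) (pderiv p) = pderiv (map_poly of_real p)"
  by (rule poly_eqI) (simp add: coeff_map_poly coeff_pderiv)

lemma map_poly_of_real_prod:
  "finite A \<Longrightarrow> map_poly (of_real :: real \<Rightarrow> complex) (\<Prod>i\<in>A. f i) = (\<Prod>i\<in>A. map_poly of_real (f i))"
  by (induction A rule: finite_induct) (simp_all add: map_poly_of_real_mult)

lemma logderiv:
  fixes M :: "complex multiset"
  assumes "z \<notin># M"
  shows "poly (pderiv (\<Prod>x\<in>#M. [:-x, 1:])) z / poly (\<Prod>x\<in>#M. [:-x, 1:]) z = (\<Sum>x\<in>#M. 1 / (z - x))"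
  using assms
proof (induction M)
  case empty
  then show ?case by simp
next
  case (add x M)
  let ?P = "\<Prod>x\<in>#M. [:-x, 1:]"
  have zx: "z - x \<noteq> 0" using add.prems by auto
  have P0: "poly ?P z \<noteq> 0" using add.prems by (auto simp: poly_prod_mset)
  have IH: "poly (pderiv ?P) z / poly ?P z = (\<Sum>x\<in>#M. 1 / (z - x))" using add by auto
  have d: "pderiv [:-x, 1:] = 1" by (simp add: pderiv_pCons)
  have "poly (pderiv (\<Prod>x\<in>#add_mset x M. [:-x, 1:])) z = poly (pderiv ([:-x, 1:] * ?P)) z"
    by simp
  also have "\<dots> = poly ([:-x, 1:] * pderiv ?P + ?P) z" by (simp only: pderiv_mult d mult_1_right)
  also have "\<dots> = (z - x) * poly (pderiv ?P) z + poly ?P z" by (simp only: poly_add poly_mult) simp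
  finally have e1: "poly (pderiv (\<Prod>x\<in>#add_mset x M. [:-x, 1:])) z = (z - x) * poly (pderiv ?P) z + poly ?P z" .
  have e2: "poly (\<Prod>x\<in>#add_mset x M. [:-x, 1:]) z = (z - x) * poly ?P z"
    by (simp add: poly_prod_mset algebra_simps)
  have "poly (pderiv (\<Prod>x\<in>#add_mset x M. [:-x, 1:])) z / poly (\<Prod>x\<in>#add_mset x M. [:-x, 1:]) z
     = (poly ?P z + (z - x) * poly (pderiv ?P) z) / ((z - x) * poly ?P z)"
    by (simp only: e1 e2 add.commute)
  also have "\<dots> = 1 / (z - x) + poly (pderiv ?P) z / poly ?P z"
    using zx P0 by (simp add: field_simps)
  finally show ?case using IH by simp
qed

lemma im_sum:
  assumes "\<forall>x\<in>#M. x \<in> \<real>"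
  shows "Im (\<Sum>x\<in>#M. 1 / (z - x)) = - Im z * (\<Sum>x\<in>#M. 1 / (cmod (z - x))^2)"
  using assms
proof (induction M)
  case empty
  then show ?case by simp
next
  case (add x M)
  then have "Im x = 0" by (auto simp: complex_is_Real_iff)
  then have "Im (1 / (z - x)) = - Im z * (1 / (cmod (z - x))^2)"
    by (simp add: Im_divide cmod_power2 divide_simps)
  with add show ?case by (simp add: algebra_simps)
qed

lemma gauss_lucas_real:
  fixes P :: "complex poly"
  assumes roots: "\<forall>z. poly P z = 0 \<longrightarrow> z \<in> \<real>" and deg: "degree P \<ge> 1"
    and z: "poly (pderiv P) z = 0"
  shows "z \<in> \<real>"
proof (cases "poly P z = 0")
  case True then show ?thesis using roots by auto
next
  case False
  define M where "M = proots P"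
  define Q where "Q = (\<Prod>x\<in>#M. [:-x, 1:])"
  have P0: "P \<noteq> 0" using deg by auto
  have c0: "lead_coeff P \<noteq> 0" using P0 by simp
  have PQ: "P = smult (lead_coeff P) Q"
    unfolding Q_def M_def using complex_poly_decompose_multiset[of P] by simp
  have Mreal: "\<forall>x\<in>#M. x \<in> \<real>" using roots P0 by (auto simp: M_def)
  have Mne: "M \<noteq> {#}" using size_proots_complex[of P] deg by (auto simp: M_def)
  have zM: "z \<notin># M" using False P0 by (auto simp: M_def)
  have Qz: "poly Q z \<noteq> 0" using False PQ by (metis mult_zero_right poly_smult)
  have "poly (pderiv Q) z = 0" using z c0 PQ by (metis pderiv_smult poly_smult mult_eq_0_iff)
  then have "(\<Sum>x\<in>#M. 1 / (z - x)) = 0" using logderiv[OF zM] Qz by (simp add: Q_def)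
  then have "- Im z * (\<Sum>x\<in>#M. 1 / (cmod (z - x))^2) = 0" using im_sum[OF Mreal, of z] by simp
  moreover have "(\<Sum>x\<in>#M. 1 / (cmod (z - x))^2) > 0"
  proof -
    obtain x N where MN: "M = add_mset x N" using Mne by (metis multiset_cases)
    have "z - x \<noteq> 0" using zM MN by auto
    then have "1 / (cmod (z - x))^2 > 0" by simp
    moreover have "(\<Sum>x\<in>#N. 1 / (cmod (z - x))^2) \<ge> 0" by (induction N) auto
    ultimately show ?thesis using MN by (simp add: add_pos_nonneg)
  qed
  ultimately have "Im z = 0" by simp
  then show ?thesis by (simp add: complex_is_Real_iff)
qed


definition E :: "(nat \<Rightarrow> real) \<Rightarrow> nat set \<Rightarrow> nat \<Rightarrow> real poly" where
  "E r A k = (\<Sum>S\<in>{S. S \<subseteq> A \<and> card S = k}. \<Prod>i\<in>S. [:r i, 1:])"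

lemma E_0: "finite A \<Longrightarrow> E r A 0 = 1"
proof -
  assume "finite A"
  then have "{S. S \<subseteq> A \<and> card S = 0} = {{}}"
    by auto (metis card_0_eq empty_iff rev_finite_subset)
  then show ?thesis by (simp add: E_def)
qed

lemma E_big: "finite A \<Longrightarrow> card A < k \<Longrightarrow> E r A k = 0"
proof -
  assume "finite A" "card A < k"
  have "\<And>S. S \<subseteq> A \<Longrightarrow> card S \<le> card A" using card_mono \<open>finite A\<close> by blast
  then have h: "{S. S \<subseteq> A \<and> card S = k} = {}"
    using \<open>card A < k\<close> by (metis (mono_tags, lifting) Collect_empty_eq leD)
  show ?thesis unfolding E_def h by simp
qed

lemma E_top: "finite A \<Longrightarrow> E r A (card A) = (\<Prod>i\<in>A. [:r i, 1:])"
proof -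
  assume "finite A"
  then have "{S. S \<subseteq> A \<and> card S = card A} = {A}" using card_subset_eq by blast
  then show ?thesis by (simp add: E_def)
qed

lemma E_insert:
  assumes "finite A" "a \<notin> A"
  shows "E r (insert a A) (Suc k) = E r A (Suc k) + [:r a, 1:] * E r A k"
proof -
  have split: "{S. S \<subseteq> insert a A \<and> card S = Suc k} =
     {S. S \<subseteq> A \<and> card S = Suc k} \<union> insert a ` {S. S \<subseteq> A \<and> card S = k}"
  proof (intro equalityI subsetI)
    fix S assume "S \<in> {S. S \<subseteq> insert a A \<and> card S = Suc k}"
    then have S: "S \<subseteq> insert a A" "card S = Suc k" by auto
    show "S \<in> {S. S \<subseteq> A \<and> card S = Suc k} \<union> insert a ` {S. S \<subseteq> A \<and> card S = k}"
    proof (cases "a \<in> S")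
      case True
      have fin: "finite S" by (meson S(1) assms(1) finite_insert finite_subset)
      have "S = insert a (S - {a})" using True by auto
      moreover have "S - {a} \<subseteq> A" "card (S - {a}) = k" using S True fin by auto
      ultimately show ?thesis by blast
    next
      case False then show ?thesis using S by auto
    qed
  next
    fix S assume "S \<in> {S. S \<subseteq> A \<and> card S = Suc k} \<union> insert a ` {S. S \<subseteq> A \<and> card S = k}"
    then show "S \<in> {S. S \<subseteq> insert a A \<and> card S = Suc k}"
    proof
      assume "S \<in> {S. S \<subseteq> A \<and> card S = Suc k}" then show ?thesis by auto
    next
      assume "S \<in> insert a ` {S. S \<subseteq> A \<and> card S = k}"
      then obtain T where T: "S = insert a T" "T \<subseteq> A" "card T = k" by auto
      have "finite T" using T(2) assms(1) by (rule finite_subset)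
      moreover have "a \<notin> T" using T(2) assms(2) by auto
      ultimately show ?thesis using T by auto
    qed
  qed
  have fin1: "finite {S. S \<subseteq> A \<and> card S = Suc k}" using assms by simp
  have fin2: "finite (insert a ` {S. S \<subseteq> A \<and> card S = k})" using assms by simp
  have disj: "{S. S \<subseteq> A \<and> card S = Suc k} \<inter> insert a ` {S. S \<subseteq> A \<and> card S = k} = {}"
    using assms by auto
  have inj: "inj_on (insert a) {S. S \<subseteq> A \<and> card S = k}"
    using assms by (intro inj_onI) (metis insert_absorb insert_ident mem_Collect_eq subsetD)
  have "E r (insert a A) (Suc k) = E r A (Suc k) + (\<Sum>S\<in>insert a ` {S. S \<subseteq> A \<and> card S = k}. \<Prod>i\<in>S. [:r i, 1:])"
    unfolding E_def split by (rule sum.union_disjoint[OF fin1 fin2 disj])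
  also have "(\<Sum>S\<in>insert a ` {S. S \<subseteq> A \<and> card S = k}. \<Prod>i\<in>S. [:r i, 1:])
      = (\<Sum>S\<in>{S. S \<subseteq> A \<and> card S = k}. \<Prod>i\<in>insert a S. [:r i, 1:])"
    by (rule sum.reindex[OF inj, unfolded o_def])
  also have "\<dots> = (\<Sum>S\<in>{S. S \<subseteq> A \<and> card S = k}. [:r a, 1:] * (\<Prod>i\<in>S. [:r i, 1:]))"
  proof (intro sum.cong refl)
    fix S assume "S \<in> {S. S \<subseteq> A \<and> card S = k}"
    then have "S \<subseteq> A" by simp
    then have "finite S" "a \<notin> S" using assms by (auto intro: rev_finite_subset)
    then show "(\<Prod>i\<in>insert a S. [:r i, 1:]) = [:r a, 1:] * (\<Prod>i\<in>S. [:r i, 1:])"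
      by (rule prod.insert)
  qed
  also have "\<dots> = [:r a, 1:] * E r A k" by (simp add: E_def sum_distrib_left)
  finally show ?thesis .
qed

lemma E_pderiv:
  "finite A \<Longrightarrow> pderiv (E r A (Suc k)) = smult (of_nat (card A - k)) (E r A k)"
proof (induction A arbitrary: k rule: finite_induct)
  case empty
  then show ?case by (simp add: E_big)
next
  case (insert a A)
  have d: "pderiv [:r a, 1:] = 1" by (simp add: pderiv_pCons)
  have "pderiv (E r (insert a A) (Suc k)) =
        smult (of_nat (card A - k)) (E r A k) + ([:r a, 1:] * pderiv (E r A k) + E r A k)"
    by (simp only: E_insert[OF insert.hyps] pderiv_add pderiv_mult d insert.IH mult_1_right)
  also have "\<dots> = smult (of_nat (card (insert a A) - k)) (E r (insert a A) k)"
  proof (cases k)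
    case 0
    then show ?thesis using insert by (simp add: E_0 algebra_simps one_pCons)
  next
    case (Suc m)
    have IH: "pderiv (E r A k) = smult (of_nat (card A - m)) (E r A m)" using insert Suc by simp
    show ?thesis
    proof (cases "k \<le> card A")
      case True
      have c: "real (card A - m) = real (card A - k) + 1" using True Suc by simp
      show ?thesis using insert Suc True
        by (simp add: E_insert IH c algebra_simps smult_add_left smult_add_right del: of_nat_diff)
    next
      case False
      then have "E r A k = 0" using insert E_big by simp
      then show ?thesis using insert Suc False
        by (simp add: E_insert IH algebra_simps)
    qed
  qed
  finally show ?case .
qed

lemma E_coeff_degree:
  assumes "finite A"
  shows "degree (E r A k) \<le> k \<and> coeff (E r A k) k = of_nat (card A choose k)"
proof -
  have prodS: "degree (\<Prod>i\<in>S. [:r i, 1:]) = card S \<and> coeff (\<Prod>i\<in>S. [:r i, 1:]) (card S) = 1"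
    if "finite S" for S
    using that
  proof (induction S rule: finite_induct)
    case empty then show ?case by simp
  next
    case (insert x S)
    have m: "lead_coeff (\<Prod>i\<in>S. [:r i, 1:]) = 1" using insert.IH by simp
    then have nz: "(\<Prod>i\<in>S. [:r i, 1:]) \<noteq> 0" by auto
    have P: "(\<Prod>i\<in>insert x S. [:r i, 1:]) = [:r x, 1:] * (\<Prod>i\<in>S. [:r i, 1:])"
      by (rule prod.insert[OF insert.hyps])
    have c: "card (insert x S) = Suc (card S)" using insert.hyps by simp
    have d: "degree ([:r x, 1:] * (\<Prod>i\<in>S. [:r i, 1:])) = Suc (card S)"
      using insert.IH nz by (subst degree_mult_eq) simp_all
    have l: "lead_coeff ([:r x, 1:] * (\<Prod>i\<in>S. [:r i, 1:])) = 1"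
      by (simp only: lead_coeff_mult m) simp
    show ?case unfolding P c using d l by metis
  qed
  have fins: "\<And>S. S \<in> {S. S \<subseteq> A \<and> card S = k} \<Longrightarrow> finite S"
    by (metis (mono_tags) assms finite_subset mem_Collect_eq)
  have dk: "\<And>S. S \<in> {S. S \<subseteq> A \<and> card S = k} \<Longrightarrow> degree (\<Prod>i\<in>S. [:r i, 1:]) \<le> k"
  proof -
    fix S assume S: "S \<in> {S. S \<subseteq> A \<and> card S = k}"
    then have "card S = k" by simp
    then show "degree (\<Prod>i\<in>S. [:r i, 1:]) \<le> k" using prodS[OF fins[OF S]] by simp
  qed
  have ck: "\<And>S. S \<in> {S. S \<subseteq> A \<and> card S = k} \<Longrightarrow> coeff (\<Prod>i\<in>S. [:r i, 1:]) k = 1"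
  proof -
    fix S assume S: "S \<in> {S. S \<subseteq> A \<and> card S = k}"
    then have "card S = k" by simp
    then show "coeff (\<Prod>i\<in>S. [:r i, 1:]) k = 1" using prodS[OF fins[OF S]] by simp
  qed
  have finA: "finite {S. S \<subseteq> A \<and> card S = k}" using assms by simp
  have "degree (E r A k) \<le> k"
    unfolding E_def by (rule degree_sum_le[OF finA dk])
  moreover have "coeff (E r A k) k = (\<Sum>S\<in>{S. S \<subseteq> A \<and> card S = k}. 1)"
    unfolding E_def coeff_sum by (rule sum.cong[OF refl ck])
  ultimately show ?thesis using n_subsets[OF assms] by simp
qed

lemma E_degree: "finite A \<Longrightarrow> k \<le> card A \<Longrightarrow> degree (E r A k) = k"
proof -
  assume a: "finite A" "k \<le> card A"
  then have "coeff (E r A k) k \<noteq> 0" using E_coeff_degree[OF a(1)] by simp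
  then have "k \<le> degree (E r A k)" by (rule le_degree)
  with E_coeff_degree[OF a(1), of r k] show ?thesis by linarith
qed

lemma E_real_roots:
  assumes "finite A" "k \<le> card A"
  shows "only_real_roots (E r A k)"
  using assms(2)
proof (induction "card A - k" arbitrary: k)
  case 0
  then have "k = card A" by simp
  then have "E r A k = (\<Prod>i\<in>A. [:r i, 1:])" using E_top assms by simp
  then show ?case unfolding only_real_roots_def
    using assms(1) by (auto simp: map_poly_of_real_prod poly_prod prod_zero_iff map_poly_pCons
         add_eq_0_iff2) (metis Reals_minus Reals_of_real minus_minus)
next
  case (Suc d)
  have k: "Suc k \<le> card A" "d = card A - Suc k" using Suc by auto
  have IH: "only_real_roots (E r A (Suc k))" using Suc.hyps(1)[OF k(2) k(1)] .
  let ?P = "map_poly (of_real :: real \<Rightarrow> complex) (E r A (Suc k))"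
  have degP: "degree ?P \<ge> 1" using E_degree[OF assms(1) k(1)] by (simp add: degree_map_poly)
  have der: "pderiv ?P = smult (of_nat (card A - k)) (map_poly of_real (E r A k))"
    by (simp add: map_poly_of_real_pderiv[symmetric] E_pderiv[OF assms(1)] map_poly_smult)
  have nz: "(of_nat (card A - k) :: complex) \<noteq> 0" using k by simp
  show ?case unfolding only_real_roots_def
  proof (intro allI impI)
    fix z assume "poly (map_poly complex_of_real (E r A k)) z = 0"
    then have "poly (pderiv ?P) z = 0" by (simp add: der)
    then show "z \<in> \<real>" using gauss_lucas_real[OF _ degP] IH by (auto simp: only_real_roots_def)
  qed
qed


lemma q_E:
  assumes "finite A'" "i \<notin> A'"
  shows "(\<Sum>j<Suc m. smult ((-1) ^ j) (E r (insert i A') (m - j) * [:r i, 1:] ^ j)) = E r A' m"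
proof (induction m)
  case 0
  then show ?case using assms by (simp add: E_0)
next
  case (Suc m)
  let ?x = "[:r i, 1:]"
  have "(\<Sum>j<Suc (Suc m). smult ((-1) ^ j) (E r (insert i A') (Suc m - j) * ?x ^ j))
      = E r (insert i A') (Suc m) +
        (\<Sum>j<Suc m. smult ((-1) ^ Suc j) (E r (insert i A') (m - j) * ?x ^ Suc j))"
    by (subst sum.lessThan_Suc_shift) simp
  also have "(\<Sum>j<Suc m. smult ((-1) ^ Suc j) (E r (insert i A') (m - j) * ?x ^ Suc j))
      = - (?x * (\<Sum>j<Suc m. smult ((-1) ^ j) (E r (insert i A') (m - j) * ?x ^ j)))"
    by (simp add: sum_distrib_left sum_negf[symmetric] algebra_simps)
  also have "\<dots> = - (?x * E r A' m)" using Suc by simp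
  finally show ?case using E_insert[OF assms] by simp
qed

theorem lemma2p7:
  fixes r :: "nat \<Rightarrow> real" and n i k :: nat
  assumes "1 \<le> i" "i \<le> n" "1 \<le> k" "k \<le> n"
  shows "degree (sigma_poly r n k) = k \<and> only_real_roots (sigma_poly r n k) \<and>
         degree (q_poly r n i k) = k - 1 \<and> only_real_roots (q_poly r n i k)"
proof -
  have sE: "\<And>m. sigma_poly r n m = E r {1..n} m" by (simp add: sigma_poly_def E_def)
  define A' where "A' = {1..n} - {i}"
  have fA: "finite A'" "i \<notin> A'" by (auto simp: A'_def)
  have ins: "{1..n} = insert i A'" using assms by (auto simp: A'_def)
  have cA: "card A' = n - 1" using assms by (simp add: A'_def)
  obtain m where m: "k = Suc m" using assms by (cases k) auto
  have qE: "q_poly r n i k = E r A' (k - 1)"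
    unfolding q_poly_def sE m ins using q_E[OF fA, where m=m and r=r] by simp
  have km: "k - 1 \<le> card A'" using assms cA by simp
  show ?thesis
    using E_degree[of "{1..n}" k r] E_real_roots[of "{1..n}" k r] assms
      E_degree[OF fA(1) km, of r] E_real_roots[OF fA(1) km, of r]
    by (simp add: sE qE)
qed

end
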